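(* With the notation below, fix $m\ge1$, $\ell$, $a=u_1<\cdots<u_{\ell+1}=b$ and a constraint set $\mathcal A$. Let $c^*(m)$ be the optimal value of the $SDPA$ problem and $y^*(m)$ the optimal value of the $SDP_0$ problem (both defined below), and suppose $y^*(m)>0$. Then $$c^*(m)\le \frac{1+y^*(m)}{y^*(m)}.$$ In particular the $SDPA$ bound is at most the $SDP_0$ bound.
   Context: Let $\Phi_k(t)=\sum_{d=0}^k p_{kd}t^d$ ($k\ge0$) be real polynomials of degree $k$ (the zonal spherical functions of a 2-point-homogeneous space, normalized by $\Phi_k(\tau_0)=1$), and let $a<b$ be reals. For reals $s_0,\ldots,s_{2m-1}$ and $\alpha<\beta$: $R_m=(s_{i+j-2})_{i,j=1}^m$, $F_m^+(\alpha)=(s_{i+j-1}-\alpha s_{i+j-2})_{i,j=1}^m$, $F_m^-(\beta)=(\beta s_{i+j-2}-s_{i+j-1})_{i,j=1}^m$, $H_m(s_0,\ldots,s_{2m-1},[\alpha,\beta])=\operatorname{diag}(R_m,F_m^+(\alpha),F_m^-(\beta))$. $SDP_0$ problem: minimize $y$ over reals $y,x_1,\ldots,x_{2m-1}$ subject to $y+\sum_{i=1}^k p_{ki}x_i\ge -p_{k0}$ for $k=1,\ldots,2m-1$ and $H_m(1,x_1,\ldots,x_{2m-1},[a,b])\succeq0$. $SDPA$ problem: given an integer $\ell\ge1$, reals $a=u_1<\cdots<u_{\ell+1}=b$, and an arbitrary additional set $\mathcal A$ of constraints on $(c,(x_i^{(k)}))$, maximize $c$ over reals $c,z,(x_i^{(k)})_{1\le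 i\le\ell,\,0\le k\le 2m-1}$ subject to: $\begin{pmatrix}1&c\\ c&z\end{pmatrix}\succeq0$; $z=c+\sum_{i=1}^\ell x_i^{(0)}$; $c+\sum_{d=0}^k p_{kd}\sum_{i=1}^\ell x_i^{(d)}\ge0$ for $k=1,\ldots,2m-1$; $H_m(x_i^{(0)},\ldots,x_i^{(2m-1)},[u_i,u_{i+1}])\succeq0$ for $i=1,\ldots,\ell$; and the constraints $\mathcal A$. Optimal values are understood as infimum/supremum. *)

theory Defs
  imports "HOL-Analysis.Analysis"
begin

text \<open>Square real matrices of size n are represented as functions nat => nat => real,
  only the entries with indices < n being relevant (0-based indexing).\<close>

definition psd :: "nat \<Rightarrow> (nat \<Rightarrow> nat \<Rightarrow> real) \<Rightarrow> bool" where
  "psd n M \<longleftrightarrow> (\<forall>i<n. \<forall>j<n. M i j = M j i) \<and>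
      (\<forall>v :: nat \<Rightarrow> real. 0 \<le> (\<Sum>i<n. \<Sum>j<n. v i * M i j * v j))"

definition mat2 :: "real \<Rightarrow> real \<Rightarrow> real \<Rightarrow> real \<Rightarrow> nat \<Rightarrow> nat \<Rightarrow> real" where
  "mat2 a11 a12 a21 a22 = (\<lambda>i j. if i = 0 then (if j = 0 then a11 else a12)
                                  else (if j = 0 then a21 else a22))"

definition Rm :: "(nat \<Rightarrow> real) \<Rightarrow> nat \<Rightarrow> nat \<Rightarrow> real" where
  "Rm s = (\<lambda>i j. s (i + j))"

definition Fplus :: "(nat \<Rightarrow> real) \<Rightarrow> real \<Rightarrow> nat \<Rightarrow> nat \<Rightarrow> real" where
  "Fplus s \<alpha> = (\<lambda>i j. s (i + j + 1) - \<alpha> * s (i + j))"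

definition Fminus :: "(nat \<Rightarrow> real) \<Rightarrow> real \<Rightarrow> nat \<Rightarrow> nat \<Rightarrow> real" where
  "Fminus s \<beta> = (\<lambda>i j. \<beta> * s (i + j) - s (i + j + 1))"

definition block_diag3 ::
  "nat \<Rightarrow> (nat \<Rightarrow> nat \<Rightarrow> real) \<Rightarrow> (nat \<Rightarrow> nat \<Rightarrow> real) \<Rightarrow> (nat \<Rightarrow> nat \<Rightarrow> real)
     \<Rightarrow> nat \<Rightarrow> nat \<Rightarrow> real" where
  "block_diag3 m A B C = (\<lambda>i j.
      if i < m \<and> j < m then A i j
      else if m \<le> i \<and> i < 2*m \<and> m \<le> j \<and> j < 2*m then B (i - m) (j - m)
      else if 2*m \<le> i \<and> i < 3*m \<and> 2*m \<le> j \<and> j < 3*m then C (i - 2*m) (j - 2*m)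
      else 0)"

definition Hm :: "nat \<Rightarrow> (nat \<Rightarrow> real) \<Rightarrow> real \<Rightarrow> real \<Rightarrow> nat \<Rightarrow> nat \<Rightarrow> real" where
  "Hm m s \<alpha> \<beta> = block_diag3 m (Rm s) (Fplus s \<alpha>) (Fminus s \<beta>)"

text \<open>Feasible set of SDP_0: x 1, ..., x (2m-1) (x 0 is ignored and replaced by 1).\<close>
definition SDP0_feasible ::
  "(nat \<Rightarrow> nat \<Rightarrow> real) \<Rightarrow> nat \<Rightarrow> real \<Rightarrow> real \<Rightarrow> real \<Rightarrow> (nat \<Rightarrow> real) \<Rightarrow> bool" where
  "SDP0_feasible p m a b y x \<longleftrightarrow>
     (\<forall>k\<in>{1..2*m-1}. y + (\<Sum>i=1..k. p k i * x i) \<ge> - p k 0) \<and>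
     psd (3*m) (Hm m (\<lambda>i. if i = 0 then 1 else x i) a b)"

definition SDP0_opt :: "(nat \<Rightarrow> nat \<Rightarrow> real) \<Rightarrow> nat \<Rightarrow> real \<Rightarrow> real \<Rightarrow> ereal" where
  "SDP0_opt p m a b = Inf {ereal y | y. \<exists>x. SDP0_feasible p m a b y x}"

text \<open>Feasibility for SDPA: x i d stands for x_i^{(d)}, 1 <= i <= l, 0 <= d <= 2m-1;
  A is the additional constraint set on (c, x).\<close>
definition SDPA_feasible ::
  "(nat \<Rightarrow> nat \<Rightarrow> real) \<Rightarrow> nat \<Rightarrow> nat \<Rightarrow> (nat \<Rightarrow> real) \<Rightarrow> (real \<Rightarrow> (nat \<Rightarrow> nat \<Rightarrow> real) \<Rightarrow> bool)
     \<Rightarrow> real \<Rightarrow> real \<Rightarrow> (nat \<Rightarrow> nat \<Rightarrow> real) \<Rightarrow> bool" where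
  "SDPA_feasible p m l u A c z x \<longleftrightarrow>
     psd 2 (mat2 1 c c z) \<and>
     z = c + (\<Sum>i=1..l. x i 0) \<and>
     (\<forall>k\<in>{1..2*m-1}. c + (\<Sum>d=0..k. p k d * (\<Sum>i=1..l. x i d)) \<ge> 0) \<and>
     (\<forall>i\<in>{1..l}. psd (3*m) (Hm m (x i) (u i) (u (i+1)))) \<and>
     A c x"

definition SDPA_opt ::
  "(nat \<Rightarrow> nat \<Rightarrow> real) \<Rightarrow> nat \<Rightarrow> nat \<Rightarrow> (nat \<Rightarrow> real) \<Rightarrow> (real \<Rightarrow> (nat \<Rightarrow> nat \<Rightarrow> real) \<Rightarrow> bool)
     \<Rightarrow> ereal" where
  "SDPA_opt p m l u A = Sup {ereal c | c. \<exists>z x. SDPA_feasible p m l u A c z x}"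

end

theory Submission imports Defs begin

definition Q :: "nat \<Rightarrow> (nat \<Rightarrow> nat \<Rightarrow> real) \<Rightarrow> (nat \<Rightarrow> real) \<Rightarrow> real" where
  "Q n M v = (\<Sum>i<n. \<Sum>j<n. v i * M i j * v j)"

lemma sum_lessThan_add_split:
  "(\<Sum>i<a+b. f i) = (\<Sum>i<a. f i) + (\<Sum>i<b. f (a+i))" for f :: "nat \<Rightarrow> real"
  by (induction b) (auto simp: add.assoc)

lemma sum3: "(\<Sum>i<3*m. f i) = (\<Sum>i<m. f i) + (\<Sum>i<m. f (m+i)) + (\<Sum>i<m. f (2*m+i))"
  for f :: "nat \<Rightarrow> real"
proof -
  have "3*m = m + (m + m)" by simp
  then show ?thesis
    by (simp only: sum_lessThan_add_split) (simp add: add.assoc mult_2)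
qed

lemma Q_block:
  "Q (3*m) (block_diag3 m A B C) v = Q m A v + Q m B (\<lambda>i. v (m+i)) + Q m C (\<lambda>i. v (2*m+i))"
  unfolding Q_def sum3 block_diag3_def
  by (simp add: sum.distrib)

lemma psd_Q: "psd n M \<longleftrightarrow> (\<forall>i<n. \<forall>j<n. M i j = M j i) \<and> (\<forall>v. 0 \<le> Q n M v)"
  unfolding psd_def Q_def by simp

lemma Hm_psd_iff:
  "psd (3*m) (Hm m s \<alpha> \<beta>) \<longleftrightarrow> psd m (Rm s) \<and> psd m (Fplus s \<alpha>) \<and> psd m (Fminus s \<beta>)"
proof -
  have sym: "\<forall>i<n. \<forall>j<n. Rm s i j = Rm s j i" "\<forall>i<n. \<forall>j<n. Fplus s \<alpha> i j = Fplus s \<alpha> j i"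
     "\<forall>i<n. \<forall>j<n. Fminus s \<beta> i j = Fminus s \<beta> j i"
     "\<forall>i<n. \<forall>j<n. Hm m s \<alpha> \<beta> i j = Hm m s \<alpha> \<beta> j i" for n
    by (auto simp: Rm_def Fplus_def Fminus_def Hm_def block_diag3_def add.commute)
  have z: "Q m M (\<lambda>i. 0) = 0" for M by (simp add: Q_def)
  show ?thesis
  proof
    assume h: "psd (3*m) (Hm m s \<alpha> \<beta>)"
    have q: "0 \<le> Q m (Rm s) v + Q m (Fplus s \<alpha>) (\<lambda>i. v (m+i)) + Q m (Fminus s \<beta>) (\<lambda>i. v (2*m+i))" for v
      using h unfolding psd_Q Hm_def Q_block by blast
    have "0 \<le> Q m (Rm s) w" for w
      using q[of "\<lambda>i. if i < m then w i else 0"] by (simp add: z Q_def)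
    moreover have "0 \<le> Q m (Fplus s \<alpha>) w" for w
      using q[of "\<lambda>i. if m \<le> i \<and> i < 2*m then w (i - m) else 0"] by (simp add: z Q_def)
    moreover have "0 \<le> Q m (Fminus s \<beta>) w" for w
      using q[of "\<lambda>i. if 2*m \<le> i then w (i - 2*m) else 0"] by (simp add: z Q_def)
    ultimately show "psd m (Rm s) \<and> psd m (Fplus s \<alpha>) \<and> psd m (Fminus s \<beta>)"
      using sym by (simp add: psd_Q)
  next
    assume "psd m (Rm s) \<and> psd m (Fplus s \<alpha>) \<and> psd m (Fminus s \<beta>)"
    then show "psd (3*m) (Hm m s \<alpha> \<beta>)"
      using sym unfolding psd_Q by (simp add: Hm_def Q_block add_nonneg_nonneg)
  qed
qed

lemma Q_sum: "Q n (\<lambda>i j. \<Sum>k\<in>K. M k i j) v = (\<Sum>k\<in>K. Q n (M k) v)"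
  unfolding Q_def by (simp add: sum_distrib_left sum_distrib_right sum.swap[of _ K] algebra_simps)

lemma Q_add: "Q n (\<lambda>i j. M i j + N i j) v = Q n M v + Q n N v"
  unfolding Q_def by (simp add: sum.distrib algebra_simps)

lemma Q_scale: "Q n (\<lambda>i j. t * M i j) v = t * Q n M v"
  unfolding Q_def by (simp add: sum_distrib_left algebra_simps)

lemma psd_scale: "psd n M \<Longrightarrow> 0 \<le> t \<Longrightarrow> psd n (\<lambda>i j. t * M i j)"
  unfolding psd_Q Q_scale by simp

lemma feas_bound:
  fixes p :: "nat \<Rightarrow> nat \<Rightarrow> real" and a b :: real and m l :: nat
    and u :: "nat \<Rightarrow> real" and A :: "real \<Rightarrow> (nat \<Rightarrow> nat \<Rightarrow> real) \<Rightarrow> bool"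
    and ystar :: real
  assumes u1: "u 1 = a" and ul: "u (l+1) = b"
    and umono: "\<And>i. 1 \<le> i \<Longrightarrow> i \<le> l \<Longrightarrow> u i < u (i+1)"
    and ystar: "SDP0_opt p m a b = ereal ystar" and ypos: "ystar > 0"
    and feas: "SDPA_feasible p m l u A c z x"
  shows "c \<le> (1 + ystar) / ystar"
proof (cases "c \<le> 1")
  case True
  have "1 \<le> (1 + ystar) / ystar" using ypos by (simp add: field_simps)
  then show ?thesis using True by linarith
next
  case False
  hence c1: "c > 1" by simp
  have mono0: "j \<le> l+1 \<Longrightarrow> u i \<le> u j" if "1 \<le> i" "i \<le> j" for i j
    using that(2)
  proof (induction j rule: dec_induct)
    case base then show ?case by simp
  next
    case (step n) then show ?case using umono[of n] that(1) by force
  qed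
  have mono: "u i \<le> u j" if "1 \<le> i" "i \<le> j" "j \<le> l+1" for i j
    using mono0 that by blast
  have ua: "a \<le> u k" "u (k+1) \<le> b" if "k \<in> {1..l}" for k
    using mono[of 1 k] mono[of "k+1" "l+1"] that u1 ul by auto
  define S where "S d = (\<Sum>k=1..l. x k d)" for d
  define S0 where "S0 = S 0"
  from feas have P2: "psd 2 (mat2 1 c c z)" and zdef: "z = c + S0"
    and lin: "\<And>k. k\<in>{1..2*m-1} \<Longrightarrow> c + (\<Sum>d=0..k. p k d * S d) \<ge> 0"
    and H: "\<And>k. k\<in>{1..l} \<Longrightarrow> psd (3*m) (Hm m (x k) (u k) (u (k+1)))"
    unfolding SDPA_feasible_def S_def S0_def by auto
  have allv: "\<forall>v. 0 \<le> (\<Sum>i<2. \<Sum>j<2. v i * mat2 1 c c z i j * v j)"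
    using P2 unfolding psd_def by blast
  have "0 \<le> (\<Sum>i<2. \<Sum>j<2. (if i = 0 then -c else 1) * mat2 1 c c z i j * (if j = 0 then -c else 1))"
    using allv by (rule allE)
  hence "0 \<le> z - c*c" by (simp add: numeral_2_eq_2 mat2_def lessThan_Suc)
  hence S0ge: "S0 \<ge> c*c - c" using zdef by simp
  have "0 < c*(c-1)" using c1 by (intro mult_pos_pos) auto
  hence S0pos: "S0 > 0" using S0ge by (simp add: right_diff_distrib)
  have Hk: "psd m (Rm (x k))" "psd m (Fplus (x k) (u k))" "psd m (Fminus (x k) (u (k+1)))"
    if "k \<in> {1..l}" for k using H[OF that] by (simp_all add: Hm_psd_iff)
  have symR: "\<forall>i<n. \<forall>j<n. Rm s i j = Rm s j i" "\<forall>i<n. \<forall>j<n. Fplus s \<alpha> i j = Fplus s \<alpha> j i"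
     "\<forall>i<n. \<forall>j<n. Fminus s \<beta> i j = Fminus s \<beta> j i" for n s \<alpha> \<beta>
    by (auto simp: Rm_def Fplus_def Fminus_def add.commute)
  have eR: "Rm S = (\<lambda>i j. \<Sum>k\<in>{1..l}. Rm (x k) i j)" by (simp add: Rm_def S_def)
  have eP: "Fplus S a = (\<lambda>i j. \<Sum>k\<in>{1..l}. Fplus (x k) (u k) i j + (u k - a) * Rm (x k) i j)"
    by (simp add: Rm_def Fplus_def S_def algebra_simps sum.distrib sum_distrib_left sum_subtractf)
  have eM: "Fminus S b = (\<lambda>i j. \<Sum>k\<in>{1..l}. Fminus (x k) (u (k+1)) i j + (b - u (k+1)) * Rm (x k) i j)"
    by (simp add: Rm_def Fminus_def S_def algebra_simps sum.distrib sum_distrib_left sum_subtractf)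
  have pR: "psd m (Rm S)"
    unfolding psd_Q
  proof (intro conjI allI)
    fix v show "0 \<le> Q m (Rm S) v" unfolding eR Q_sum
      using Hk(1) by (intro sum_nonneg) (simp add: psd_Q)
  qed (simp add: symR)
  have pP: "psd m (Fplus S a)"
    unfolding psd_Q
  proof (intro conjI allI)
    fix v show "0 \<le> Q m (Fplus S a) v" unfolding eP Q_sum Q_add Q_scale
      using Hk(1,2) ua(1) by (intro sum_nonneg add_nonneg_nonneg mult_nonneg_nonneg) (auto simp: psd_Q)
  qed (simp add: symR)
  have pM: "psd m (Fminus S b)"
    unfolding psd_Q
  proof (intro conjI allI)
    fix v show "0 \<le> Q m (Fminus S b) v" unfolding eM Q_sum Q_add Q_scale
      using Hk(1,3) ua(2) by (intro sum_nonneg add_nonneg_nonneg mult_nonneg_nonneg) (auto simp: psd_Q)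
  qed (simp add: symR)
  define xs where "xs d = S d / S0" for d
  have xs0: "(\<lambda>i. if i = 0 then 1 else xs i) = xs"
    using S0pos by (auto simp: xs_def S0_def)
  have "Rm xs = (\<lambda>i j. (1/S0) * Rm S i j)" "Fplus xs a = (\<lambda>i j. (1/S0) * Fplus S a i j)"
    "Fminus xs b = (\<lambda>i j. (1/S0) * Fminus S b i j)"
    by (auto simp: xs_def Rm_def Fplus_def Fminus_def diff_divide_distrib)
  hence pH: "psd (3*m) (Hm m xs a b)"
    using psd_scale[OF pR, of "1/S0"] psd_scale[OF pP, of "1/S0"] psd_scale[OF pM, of "1/S0"] S0pos
    by (simp only: Hm_psd_iff) simp
  have lin2: "c / S0 + (\<Sum>i=1..k. p k i * xs i) \<ge> - p k 0" if k: "k\<in>{1..2*m-1}" for k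
  proof -
    have "(\<Sum>d=0..k. p k d * S d) = p k 0 * S0 + (\<Sum>d=Suc 0..k. p k d * S d)"
      by (simp add: sum.atLeast_Suc_atMost S0_def)
    hence "0 \<le> c + p k 0 * S0 + (\<Sum>d=1..k. p k d * S d)" using lin[OF k] by simp
    hence "0 \<le> (c + p k 0 * S0 + (\<Sum>d=1..k. p k d * S d)) / S0" using S0pos by simp
    also have "\<dots> = c / S0 + p k 0 + (\<Sum>i=1..k. p k i * xs i)"
      using S0pos by (simp add: xs_def add_divide_distrib sum_divide_distrib)
    finally show ?thesis by simp
  qed
  have "SDP0_feasible p m a b (c / S0) xs"
    unfolding SDP0_feasible_def xs0 using pH lin2 by simp
  hence "SDP0_opt p m a b \<le> ereal (c / S0)"
    unfolding SDP0_opt_def by (auto intro: Inf_lower)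
  hence yle: "ystar \<le> c / S0" using ystar by simp
  have "c / S0 \<le> c / (c*c - c)"
    using c1 S0ge S0pos \<open>0 < c*(c-1)\<close> by (intro divide_left_mono) (auto simp: right_diff_distrib)
  also have "\<dots> = 1 / (c - 1)" using c1 by (simp add: field_simps)
  finally have "ystar \<le> 1 / (c - 1)" using yle by linarith
  hence "ystar * (c - 1) \<le> 1" using c1 by (simp add: field_simps)
  thus ?thesis using ypos by (simp add: field_simps)
qed

theorem theorem6p2:
  fixes p :: "nat \<Rightarrow> nat \<Rightarrow> real" and \<tau>0 a b :: real and m l :: nat
    and u :: "nat \<Rightarrow> real" and A :: "real \<Rightarrow> (nat \<Rightarrow> nat \<Rightarrow> real) \<Rightarrow> bool"
    and ystar :: real
  assumes deg: "\<And>k. p k k \<noteq> 0" "\<And>k d. k < d \<Longrightarrow> p k d = 0"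
    and norm: "\<And>k. (\<Sum>d=0..k. p k d * \<tau>0 ^ d) = 1"
    and ab: "a < b" and m: "m \<ge> 1" and l: "l \<ge> 1"
    and u1: "u 1 = a" and ul: "u (l+1) = b"
    and umono: "\<And>i. 1 \<le> i \<Longrightarrow> i \<le> l \<Longrightarrow> u i < u (i+1)"
    and ystar: "SDP0_opt p m a b = ereal ystar" and ypos: "ystar > 0"
  shows "SDPA_opt p m l u A \<le> ereal ((1 + ystar) / ystar)"
  unfolding SDPA_opt_def
proof (rule Sup_least)
  fix e assume "e \<in> {ereal c |c. \<exists>z x. SDPA_feasible p m l u A c z x}"
  then obtain c z x where e: "e = ereal c" and f: "SDPA_feasible p m l u A c z x" by blast
  show "e \<le> ereal ((1 + ystar) / ystar)"
    using feas_bound[OF u1 ul umono ystar ypos f] e by simp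
qed

end
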